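(* Let $p\ge2$ and $A\in GL_n(\mathbb{C}(z))$ be such that the system $\phi_p(Y)=AY$ is regular singular at $\infty$. Then there exist $F_\infty\in GL_n(\mathcal{M}(\mathbb{P}^1(\mathbb{C})\setminus\overline{D}(0,1)))$ and $A_\infty\in GL_n(\mathbb{C})$ such that $\phi_p(F_\infty)^{-1}AF_\infty=A_\infty$.
   Context: $\phi_p$ acts entrywise by $f(z)\mapsto f(z^p)$. The system is regular singular at $\infty$ if there exists $T\in GL_n(\mathbb{C}(\{1/z\}))$ (convergent Laurent series in $1/z$) such that $B=\phi_p(T)^{-1}AT$ is regular at $\infty$, i.e. $B(1/z)$ has entries analytic at $0$ and is invertible at $0$. $\mathcal{M}(U)$ denotes the meromorphic functions on $U$ and $\overline{D}(0,1)$ the closed unit disk. *)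

theory Defs
  imports "HOL-Complex_Analysis.Complex_Analysis"
begin

text \<open>A function C -> C is (the evaluation of) a rational function in C(z):
  it agrees with P/Q (Q a nonzero polynomial) away from the zeros of Q.
  Values at the finitely many poles are irrelevant.\<close>
definition rational_fun :: "(complex \<Rightarrow> complex) \<Rightarrow> bool" where
  "rational_fun f \<longleftrightarrow> (\<exists>P Q :: complex poly. Q \<noteq> 0 \<and>
      (\<forall>z. poly Q z \<noteq> 0 \<longrightarrow> f z = poly P z / poly Q z))"

definition phi :: "nat \<Rightarrow> (complex \<Rightarrow> 'a) \<Rightarrow> complex \<Rightarrow> 'a" where
  "phi p f = (\<lambda>z. f (z ^ p))"

definition GL_rat :: "(complex \<Rightarrow> complex^'n::finite^'n) \<Rightarrow> bool" where
  "GL_rat A \<longleftrightarrow> (\<forall>i j. rational_fun (\<lambda>z. A z $ i $ j)) \<and>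
      (\<forall>\<^sub>\<approx>z. det (A z) \<noteq> 0)"

text \<open>Regular singularity at infinity of phi_p(Y) = A Y: there is T in GL_n(C({1/z}))
  (entries are germs at infinity of meromorphic functions, i.e. T(1/w) meromorphic at 0,
  with determinant not identically zero) such that B = phi_p(T)^{-1} A T is regular at
  infinity: B(1/w) extends analytically to w = 0 with invertible value there.\<close>
definition regular_singular_at_infinity ::
    "nat \<Rightarrow> (complex \<Rightarrow> complex^'n::finite^'n) \<Rightarrow> bool" where
  "regular_singular_at_infinity p A \<longleftrightarrow>
     (\<exists>T :: complex \<Rightarrow> complex^'n^'n.
        (\<forall>i j. (\<lambda>w. T (1 / w) $ i $ j) meromorphic_on {0}) \<and>
        (\<forall>\<^sub>F w in at 0. det (T (1 / w)) \<noteq> 0) \<and>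
        (\<exists>B0 :: complex \<Rightarrow> complex^'n^'n.
           (\<forall>i j. (\<lambda>w. B0 w $ i $ j) analytic_on {0}) \<and> det (B0 0) \<noteq> 0 \<and>
           (\<forall>\<^sub>F w in at 0.
              B0 w = (let z = 1 / w in matrix_inv (phi p T z) ** A z ** T z))))"

end

theory Submission
  imports Defs
begin



no_notation fps_nth (infixl \<open>$\<close> 75)


lemma mi_props:
  fixes X :: "'a::field^'n^'n"
  assumes "invertible X"
  shows "X ** matrix_inv X = mat 1" "matrix_inv X ** X = mat 1"
proof -
  have "\<exists>A'. X ** A' = mat 1 \<and> A' ** X = mat 1" using assms unfolding invertible_def by blast
  then have "X ** matrix_inv X = mat 1 \<and> matrix_inv X ** X = mat 1"
    unfolding matrix_inv_def by (rule someI_ex)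
  then show "X ** matrix_inv X = mat 1" "matrix_inv X ** X = mat 1" by auto
qed

lemma mi_det:
  fixes X :: "'a::field^'n^'n"
  assumes "det X \<noteq> 0"
  shows "X ** matrix_inv X = mat 1" "matrix_inv X ** X = mat 1" "det (matrix_inv X) \<noteq> 0"
proof -
  have inv: "invertible X" using assms invertible_det_nz by blast
  show 1: "X ** matrix_inv X = mat 1" "matrix_inv X ** X = mat 1" using mi_props[OF inv] by auto
  have "det X * det (matrix_inv X) = 1" using 1 by (metis det_I det_mul)
  then show "det (matrix_inv X) \<noteq> 0" by auto
qed

lemma mi_entry:
  fixes X :: "'a::field^'n^'n"
  assumes "det X \<noteq> 0"
  shows "matrix_inv X $ i $ j = det (\<chi> a b. if b = i then (if a = j then 1 else 0) else X$a$b) / det X"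
proof -
  let ?c = "\<chi> k. matrix_inv X $ k $ j"
  let ?b = "\<chi> a. (if a = j then 1 else (0::'a))"
  have "X *v ?c = ?b"
  proof -
    have "X *v ?c = (\<chi> a. (X ** matrix_inv X) $ a $ j)"
      by (simp add: vec_eq_iff matrix_vector_mult_def matrix_matrix_mult_def)
    also have "\<dots> = ?b" using mi_det(1)[OF assms] by (simp add: vec_eq_iff mat_def)
    finally show ?thesis .
  qed
  then have "?c = (\<chi> k. det(\<chi> a b. if b=k then ?b$a else X$a$b) / det X)"
    using cramer[OF assms] by blast
  then have "?c $ i = (\<chi> k. det(\<chi> a b. if b=k then ?b$a else X$a$b) / det X) $ i" by simp
  moreover have "(\<chi> a b. if b=i then ?b$a else X$a$b) = (\<chi> a b. if b = i then (if a = j then 1 else 0) else X$a$b)"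
    by (simp add: vec_eq_iff)
  ultimately show ?thesis by simp
qed

definition mnorm :: "complex^'n^'n \<Rightarrow> real" where
  "mnorm M = (\<Sum>i\<in>UNIV. \<Sum>j\<in>UNIV. norm (M$i$j))"

lemma mnorm_ge0: "mnorm M \<ge> 0"
  unfolding mnorm_def by (intro sum_nonneg) auto

lemma norm_le_mnorm: "norm M \<le> mnorm M"
proof -
  have l1: "norm x \<le> (\<Sum>i\<in>UNIV. norm (x$i))" for x :: "'b::real_normed_vector^'m"
    unfolding norm_vec_def by (rule L2_set_le_sum) auto
  have "norm M \<le> (\<Sum>i\<in>UNIV. norm (M$i))" by (rule l1)
  also have "\<dots> \<le> (\<Sum>i\<in>UNIV. \<Sum>j\<in>UNIV. norm (M$i$j))"
    by (intro sum_mono l1)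
  finally show ?thesis unfolding mnorm_def .
qed

lemma entry_le_mnorm: "norm (M$i$j) \<le> mnorm M"
proof -
  have "norm (M$i$j) \<le> (\<Sum>j\<in>UNIV. norm (M$i$j))"
    by (rule member_le_sum) auto
  also have "\<dots> \<le> (\<Sum>i\<in>UNIV. \<Sum>j\<in>UNIV. norm (M$i$j))"
    by (rule member_le_sum) (auto intro: sum_nonneg)
  finally show ?thesis unfolding mnorm_def .
qed

lemma mnorm_add: "mnorm (M + N) \<le> mnorm M + mnorm N"
  unfolding mnorm_def by (simp add: sum.distrib[symmetric] sum_mono norm_triangle_ineq)

lemma mnorm_mult: "mnorm (M ** N) \<le> mnorm M * mnorm N"
proof -
  have row: "(\<Sum>j\<in>UNIV. norm (N$k$j)) \<le> mnorm N" for k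
    unfolding mnorm_def
    by (rule member_le_sum[where f="\<lambda>k. \<Sum>j\<in>UNIV. norm (N$k$j)", simplified])
       (auto intro!: sum_nonneg)
  have "mnorm (M ** N) = (\<Sum>i\<in>UNIV. \<Sum>j\<in>UNIV. norm (\<Sum>k\<in>UNIV. M$i$k * N$k$j))"
    unfolding mnorm_def by (simp add: matrix_matrix_mult_def)
  also have "\<dots> \<le> (\<Sum>i\<in>UNIV. \<Sum>j\<in>UNIV. \<Sum>k\<in>UNIV. norm (M$i$k) * norm (N$k$j))"
    by (intro sum_mono) (metis (no_types, lifting) norm_mult norm_sum sum.cong)
  also have "\<dots> = (\<Sum>i\<in>UNIV. \<Sum>k\<in>UNIV. norm (M$i$k) * (\<Sum>j\<in>UNIV. norm (N$k$j)))"
  proof (rule sum.cong[OF refl])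
    fix i
    show "(\<Sum>j\<in>UNIV. \<Sum>k\<in>UNIV. norm (M$i$k) * norm (N$k$j)) = (\<Sum>k\<in>UNIV. norm (M$i$k) * (\<Sum>j\<in>UNIV. norm (N$k$j)))"
      unfolding sum_distrib_left by (rule sum.swap)
  qed
  also have "\<dots> \<le> (\<Sum>i\<in>UNIV. \<Sum>k\<in>UNIV. norm (M$i$k) * mnorm N)"
    by (intro sum_mono mult_left_mono row) auto
  also have "\<dots> = mnorm M * mnorm N"
    unfolding mnorm_def by (simp add: sum_distrib_right)
  finally show ?thesis .
qed

lemma mnorm_diff: "mnorm (M - N) \<le> mnorm M + mnorm N"
  unfolding mnorm_def by (simp add: sum.distrib[symmetric] sum_mono norm_triangle_ineq4)

lemma mnorm_zero[simp]: "mnorm 0 = 0" unfolding mnorm_def by simp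




definition mero_mat :: "(complex \<Rightarrow> complex^'n^'n) \<Rightarrow> complex set \<Rightarrow> bool" where
  "mero_mat F U \<longleftrightarrow> (\<forall>i j. (\<lambda>z. F z $ i $ j) meromorphic_on U)"

definition ana_mat :: "(complex \<Rightarrow> complex^'n^'n) \<Rightarrow> complex set \<Rightarrow> bool" where
  "ana_mat F U \<longleftrightarrow> (\<forall>i j. (\<lambda>z. F z $ i $ j) analytic_on U)"

lemma ana_imp_mero: "ana_mat F U \<Longrightarrow> mero_mat F U"
  unfolding ana_mat_def mero_mat_def using analytic_on_imp_meromorphic_on by blast

lemma mero_mult: "mero_mat F U \<Longrightarrow> mero_mat G U \<Longrightarrow> mero_mat (\<lambda>z. F z ** G z) U"
  unfolding mero_mat_def matrix_matrix_mult_def by (auto intro!: meromorphic_intros)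

lemma ana_mult: "ana_mat F U \<Longrightarrow> ana_mat G U \<Longrightarrow> ana_mat (\<lambda>z. F z ** G z) U"
  unfolding ana_mat_def matrix_matrix_mult_def by (auto intro!: analytic_intros)

lemma mero_const: "mero_mat (\<lambda>z. C) U"
  unfolding mero_mat_def by auto

lemma ana_const: "ana_mat (\<lambda>z. C) U"
  unfolding ana_mat_def by auto

lemma mero_det: "mero_mat F U \<Longrightarrow> (\<lambda>z. det (F z)) meromorphic_on U"
  unfolding mero_mat_def det_def by (auto intro!: meromorphic_intros)

lemma ana_det: "ana_mat F U \<Longrightarrow> (\<lambda>z. det (F z)) analytic_on U"
  unfolding ana_mat_def det_def by (auto intro!: analytic_intros)

lemma mero_compose: "mero_mat F V \<Longrightarrow> g analytic_on U \<Longrightarrow> g ` U \<subseteq> V \<Longrightarrow> mero_mat (\<lambda>z. F (g z)) U"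
  unfolding mero_mat_def using meromorphic_on_compose[of _ V g U] by blast

lemma ana_compose: "ana_mat F V \<Longrightarrow> g analytic_on U \<Longrightarrow> g ` U \<subseteq> V \<Longrightarrow> ana_mat (\<lambda>z. F (g z)) U"
  unfolding ana_mat_def
  using analytic_on_compose_gen[of g U _ V] by (auto simp: o_def image_subset_iff)

lemma mero_subset: "mero_mat F V \<Longrightarrow> U \<subseteq> V \<Longrightarrow> mero_mat F U"
  unfolding mero_mat_def using meromorphic_on_subset by blast

lemma ana_subset: "ana_mat F V \<Longrightarrow> U \<subseteq> V \<Longrightarrow> ana_mat F U"
  unfolding ana_mat_def using analytic_on_subset by blast

lemma ana_inv:
  fixes F :: "complex \<Rightarrow> complex^'n^'n"
  assumes "open U" "ana_mat F U" "\<And>z. z \<in> U \<Longrightarrow> det (F z) \<noteq> 0"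
  shows "ana_mat (\<lambda>z. matrix_inv (F z)) U"
  unfolding ana_mat_def
proof (intro allI)
  fix i j
  have "ana_mat (\<lambda>z. (\<chi> a b. if b = i then (if a = j then 1 else 0) else F z$a$b) :: complex^'n^'n) U"
    unfolding ana_mat_def
  proof (intro allI)
    fix a b
    show "(\<lambda>z. ((\<chi> a b. if b = i then (if a = j then 1 else 0) else F z$a$b) :: complex^'n^'n) $ a $ b) analytic_on U"
      using assms(2) unfolding ana_mat_def by (cases "b = i") auto
  qed
  then have "(\<lambda>z. det ((\<chi> a b. if b = i then (if a = j then 1 else 0) else F z$a$b) :: complex^'n^'n)) analytic_on U"
    by (rule ana_det)
  moreover have "(\<lambda>z. det (F z)) analytic_on U" using assms(2) by (rule ana_det)
  ultimately have "(\<lambda>z. det ((\<chi> a b. if b = i then (if a = j then 1 else 0) else F z$a$b) :: complex^'n^'n) / det (F z)) analytic_on U"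
    using assms(3) by (rule analytic_on_divide)
  moreover have "\<And>z. z \<in> U \<Longrightarrow> matrix_inv (F z) $ i $ j = det ((\<chi> a b. if b = i then (if a = j then 1 else 0) else F z$a$b) :: complex^'n^'n) / det (F z)"
    using assms(3) by (rule mi_entry)
  ultimately show "(\<lambda>z. matrix_inv (F z) $ i $ j) analytic_on U"
    using assms(1) unfolding analytic_on_open[OF assms(1)] by (metis (no_types, lifting) holomorphic_cong)
qed

lemma mero_inv:
  fixes F :: "complex \<Rightarrow> complex^'n^'n"
  assumes "mero_mat F U" "eventually (\<lambda>z. det (F z) \<noteq> 0) (cosparse U)"
  shows "mero_mat (\<lambda>z. matrix_inv (F z)) U"
  unfolding mero_mat_def
proof (intro allI)
  fix i j
  have "mero_mat (\<lambda>z. (\<chi> a b. if b = i then (if a = j then 1 else 0) else F z$a$b) :: complex^'n^'n) U"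
    unfolding mero_mat_def
  proof (intro allI)
    fix a b
    show "(\<lambda>z. ((\<chi> a b. if b = i then (if a = j then 1 else 0) else F z$a$b) :: complex^'n^'n) $ a $ b) meromorphic_on U"
      using assms(1) unfolding mero_mat_def by (cases "b = i") auto
  qed
  then have "(\<lambda>z. det ((\<chi> a b. if b = i then (if a = j then 1 else 0) else F z$a$b) :: complex^'n^'n)) meromorphic_on U"
    by (rule mero_det)
  moreover have "(\<lambda>z. det (F z)) meromorphic_on U" using assms(1) by (rule mero_det)
  ultimately have "(\<lambda>z. det ((\<chi> a b. if b = i then (if a = j then 1 else 0) else F z$a$b) :: complex^'n^'n) / det (F z)) meromorphic_on U"
    by (rule meromorphic_on_divide)
  moreover have "eventually (\<lambda>z. det ((\<chi> a b. if b = i then (if a = j then 1 else 0) else F z$a$b) :: complex^'n^'n) / det (F z) = matrix_inv (F z) $ i $ j) (cosparse U)"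
    using assms(2) by eventually_elim (simp add: mi_entry)
  ultimately show "(\<lambda>z. matrix_inv (F z) $ i $ j) meromorphic_on U"
    by (subst (asm) meromorphic_on_cong') auto
qed

lemma analytic_on_poly': "(\<lambda>z. poly P z) analytic_on U"
  unfolding poly_altdef by (intro analytic_intros)




lemma mmult_diff_left: "(A::complex^'n^'n) ** (B - C) = A ** B - A ** C"
  by (simp add: vec_eq_iff matrix_matrix_mult_def sum_subtractf algebra_simps)

lemma mmult_diff_right: "((B::complex^'n^'n) - C) ** A = B ** A - C ** A"
  by (simp add: vec_eq_iff matrix_matrix_mult_def sum_subtractf algebra_simps)

lemma tendsto_mmult:
  fixes f :: "'b \<Rightarrow> complex^'n^'n"
  assumes "(f \<longlongrightarrow> l) F"
  shows "((\<lambda>x. X ** f x ** Y) \<longlongrightarrow> X ** l ** Y) F"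
proof (rule vec_tendstoI)
  fix i
  show "((\<lambda>x. (X ** f x ** Y) $ i) \<longlongrightarrow> (X ** l ** Y) $ i) F"
  proof (rule vec_tendstoI)
    fix j
    have e: "\<And>a b. ((\<lambda>x. f x $ a $ b) \<longlongrightarrow> l $ a $ b) F"
      by (intro tendsto_vec_nth assms)
    show "((\<lambda>x. (X ** f x ** Y) $ i $ j) \<longlongrightarrow> (X ** l ** Y) $ i $ j) F"
      unfolding matrix_matrix_mult_def vec_lambda_beta
      by (intro tendsto_intros e)
  qed
qed

lemma mnorm_zero_iff: "mnorm M = 0 \<Longrightarrow> M = 0"
proof -
  assume "mnorm M = 0"
  then have "norm (M$i$j) = 0" for i j using entry_le_mnorm[of M i j] by (auto intro: antisym)
  then show "M = 0" by (simp add: vec_eq_iff)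
qed

lemma bounded_on_cball:
  fixes f :: "complex \<Rightarrow> real"
  assumes "continuous_on (cball 0 R) f"
  obtains B where "B > 0" "\<And>w. w \<in> cball 0 R \<Longrightarrow> f w \<le> B"
proof -
  have "compact (f ` cball 0 R)" by (intro compact_continuous_image assms) auto
  then have "bounded (f ` cball 0 R)" by (rule compact_imp_bounded)
  then obtain B where B: "\<forall>x\<in>f ` cball 0 R. norm x \<le> B" unfolding bounded_iff by blast
  have "f w \<le> max B 1" if "w \<in> cball 0 R" for w
    using B that by force
  then show ?thesis
    by (intro that[of "max B 1"]) auto
qed

lemma lip0:
  fixes f :: "complex \<Rightarrow> complex"
  assumes "f analytic_on ball 0 r" "0 < R" "R < r" "f 0 = 0"
  obtains L where "L \<ge> 0" "\<And>w. w \<in> cball 0 R \<Longrightarrow> norm (f w) \<le> L * norm w"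
proof -
  have hol: "f holomorphic_on ball 0 r" using assms(1) by (simp add: analytic_on_open)
  have "deriv f holomorphic_on ball 0 r" by (intro holomorphic_deriv hol) auto
  then have "continuous_on (cball 0 R) (deriv f)"
    by (rule holomorphic_on_imp_continuous_on[THEN continuous_on_subset]) (use assms in auto)
  then have cont: "continuous_on (cball 0 R) (\<lambda>w. norm (deriv f w))" by (intro continuous_intros)
  obtain B where B: "B > 0" "\<And>w. w \<in> cball 0 R \<Longrightarrow> norm (deriv f w) \<le> B"
    using bounded_on_cball[OF cont] by blast
  have "norm (f w - f 0) \<le> B * norm (w - 0)" if "w \<in> cball 0 R" for w
  proof (rule field_differentiable_bound[of "cball 0 R" f "deriv f" B])
    fix z :: complex assume z: "z \<in> cball 0 R"
    then have "z \<in> ball 0 r" using assms by auto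
    then have "f field_differentiable at z" using hol holomorphic_on_imp_differentiable_at by auto
    then show "(f has_field_derivative deriv f z) (at z within cball 0 R)"
      using DERIV_deriv_iff_field_differentiable has_field_derivative_at_within by blast
  qed (use that B assms in auto)
  then show ?thesis using assms B by (intro that[of B]) auto
qed




primrec itf :: "nat \<Rightarrow> (complex \<Rightarrow> complex^'n^'n) \<Rightarrow> (complex \<Rightarrow> complex^'n^'n) \<Rightarrow> complex^'n^'n \<Rightarrow> nat \<Rightarrow> complex \<Rightarrow> complex^'n^'n" where
  "itf p Bi F0 C 0 = F0"
| "itf p Bi F0 C (Suc k) = (\<lambda>w. Bi w ** itf p Bi F0 C k (w^p) ** C)"

lemma ana_diff: "ana_mat F U \<Longrightarrow> ana_mat G U \<Longrightarrow> ana_mat (\<lambda>z. F z - G z) U"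
  unfolding ana_mat_def by (auto intro!: analytic_intros)

lemma norm_pow_le:
  fixes w :: complex
  assumes "norm w \<le> 1" "p \<ge> 1"
  shows "norm (w^p) \<le> norm w"
proof -
  have "norm w ^ p \<le> norm w ^ 1" by (rule power_decreasing) (use assms in auto)
  then show ?thesis by (simp add: norm_power)
qed

lemma dist_entry_le: "dist ((x::complex^'n^'n) $ a $ b) (y $ a $ b) \<le> dist x y"
proof -
  have "norm ((x - y) $ a $ b) \<le> norm ((x - y) $ a)" by (rule Finite_Cartesian_Product.norm_nth_le)
  also have "\<dots> \<le> norm (x - y)" by (rule Finite_Cartesian_Product.norm_nth_le)
  finally show ?thesis by (simp add: dist_norm)
qed

lemma uniform_limit_entry:
  fixes f :: "nat \<Rightarrow> complex \<Rightarrow> complex^'n^'n"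
  assumes "uniform_limit S f g sequentially"
  shows "uniform_limit S (\<lambda>n w. f n w $ a $ b) (\<lambda>w. g w $ a $ b) sequentially"
  unfolding uniform_limit_iff
proof (intro allI impI)
  fix e :: real assume "e > 0"
  then have "\<forall>\<^sub>F n in sequentially. \<forall>x\<in>S. dist (f n x) (g x) < e"
    using assms unfolding uniform_limit_iff by blast
  then show "\<forall>\<^sub>F n in sequentially. \<forall>x\<in>S. dist (f n x $ a $ b) (g x $ a $ b) < e"
    by eventually_elim (use dist_entry_le order.strict_trans1 in blast)
qed

lemma G_exists:
  fixes B0 :: "complex \<Rightarrow> complex^'n^'n"
  assumes p: "p \<ge> 2" and r: "0 < r" "r \<le> 1"
    and ana: "ana_mat B0 (ball 0 r)" and nz: "\<forall>w\<in>ball 0 r. det (B0 w) \<noteq> 0"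
  shows "\<exists>\<rho> G. 0 < \<rho> \<and> \<rho> \<le> r \<and> ana_mat G (ball 0 \<rho>) \<and> (\<forall>w\<in>ball 0 \<rho>. det (G w) \<noteq> 0) \<and>
           (\<forall>w\<in>ball 0 \<rho>. B0 w ** G w = G (w^p) ** B0 0)"
proof -
  define Bi where "Bi = (\<lambda>w. matrix_inv (B0 w))"
  define C where "C = B0 0"
  have anaBi: "ana_mat Bi (ball 0 r)" unfolding Bi_def by (rule ana_inv) (use ana nz in auto)
  have BiC: "Bi 0 ** C = mat 1" unfolding Bi_def C_def using nz r by (intro mi_det(2)) auto
  define R where "R = r/2"
  have R: "0 < R" "R < r" "R \<le> 1/2" using r by (auto simp: R_def)
  have cbsub: "cball 0 R \<subseteq> ball 0 r" using R by auto
  have contBi_e: "continuous_on (cball 0 R) (\<lambda>w. Bi w $ i $ j)" for i j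
    using anaBi unfolding ana_mat_def
    by (meson analytic_imp_holomorphic holomorphic_on_imp_continuous_on continuous_on_subset cbsub)
  have contBi: "continuous_on (cball 0 R) (\<lambda>w. mnorm (Bi w))"
    unfolding mnorm_def by (intro continuous_intros contBi_e)
  obtain c where c: "c > 0" "\<And>w. w \<in> cball 0 R \<Longrightarrow> mnorm (Bi w) \<le> c"
    using bounded_on_cball[OF contBi] by blast
  define E where "E = (\<lambda>w. Bi w ** C - mat 1)"
  have anaE: "ana_mat E (ball 0 r)" unfolding E_def
    by (intro ana_diff ana_mult anaBi ana_const)
  have E0: "E 0 = 0" unfolding E_def using BiC by simp
  define Lf where "Lf = (\<lambda>a b. SOME L. L \<ge> 0 \<and> (\<forall>w\<in>cball 0 R. norm (E w $ a $ b) \<le> L * norm w))"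
  have Lex: "\<exists>L. L \<ge> 0 \<and> (\<forall>w\<in>cball 0 R. norm (E w $ a $ b) \<le> L * norm w)" for a b
  proof -
    have an: "(\<lambda>w. E w $ a $ b) analytic_on ball 0 r" using anaE unfolding ana_mat_def by blast
    have z: "(\<lambda>w. E w $ a $ b) 0 = 0" using E0 by simp
    obtain L where "L \<ge> 0" "\<And>w. w \<in> cball 0 R \<Longrightarrow> norm (E w $ a $ b) \<le> L * norm w"
      using lip0[OF an R(1) R(2) z] by blast
    then show ?thesis by blast
  qed
  have Lf: "Lf a b \<ge> 0" "\<And>w. w \<in> cball 0 R \<Longrightarrow> norm (E w $ a $ b) \<le> Lf a b * norm w" for a b
    using someI_ex[OF Lex[of a b]] unfolding Lf_def by blast+
  define L where "L = (\<Sum>a\<in>UNIV. \<Sum>b\<in>UNIV. Lf a b)"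
  have L0: "L \<ge> 0" unfolding L_def by (intro sum_nonneg Lf(1))
  have LE: "mnorm (E w) \<le> L * norm w" if "w \<in> cball 0 R" for w :: complex
  proof -
    have "mnorm (E w) \<le> (\<Sum>a\<in>UNIV. \<Sum>b\<in>UNIV. Lf a b * norm w)"
      unfolding mnorm_def by (intro sum_mono Lf(2) that)
    also have "\<dots> = L * norm w" unfolding L_def by (simp add: sum_distrib_right)
    finally show ?thesis .
  qed
  define a where "a = mnorm C"
  have a0: "a \<ge> 0" unfolding a_def by (rule mnorm_ge0)
  define \<rho> where "\<rho> = min R (1 / (2 * (c * a + 1)))"
  have ca0: "c * a \<ge> 0" using c a0 by simp
  have \<rho>: "0 < \<rho>" "\<rho> \<le> R" "\<rho> < 1" using R ca0 by (auto simp: \<rho>_def)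
  have \<rho>2: "c * a * \<rho> \<le> 1/2"
  proof -
    have "\<rho> \<le> 1 / (2 * (c * a + 1))" unfolding \<rho>_def by simp
    then have "c * a * \<rho> \<le> c * a * (1 / (2 * (c * a + 1)))" using ca0 by (intro mult_left_mono) auto
    also have "\<dots> \<le> 1/2" using ca0 by (simp add: field_simps)
    finally show ?thesis .
  qed
  define H where "H = itf p Bi (\<lambda>w. mat 1) C"
  define D where "D = (\<lambda>k w. H (Suc k) w - H k w)"
  have Hsuc: "H (Suc k) w = Bi w ** H k (w^p) ** C" for k and w :: complex unfolding H_def by simp
  have Dsuc: "D (Suc k) w = Bi w ** D k (w^p) ** C" for k and w :: complex
    unfolding D_def Hsuc by (simp add: mmult_diff_left mmult_diff_right)
  have D0: "D 0 w = E w" for w unfolding D_def H_def E_def by simp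
  have p1: "p \<ge> 1" using p by simp
  have powR: "w^p \<in> cball 0 R" if "w \<in> cball 0 R" for w :: complex
    using norm_pow_le[OF _ p1, of w] that R by auto
  have Dbound: "\<forall>w::complex\<in>cball 0 R. mnorm (D k w) \<le> (c*a)^k * L * norm w ^ (p^k)" for k
  proof (induction k)
    case 0
    then show ?case using LE by (simp add: D0)
  next
    case (Suc k)
    show ?case
    proof
      fix w :: complex assume w: "w \<in> cball 0 R"
      have IH: "mnorm (D k (w^p)) \<le> (c*a)^k * L * norm (w^p) ^ (p^k)"
        using Suc.IH powR[OF w] by blast
      have "mnorm (D (Suc k) w) \<le> mnorm (Bi w ** D k (w^p)) * mnorm C"
        unfolding Dsuc by (rule mnorm_mult)
      also have "\<dots> \<le> (mnorm (Bi w) * mnorm (D k (w^p))) * mnorm C"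
        by (intro mult_right_mono mnorm_mult mnorm_ge0)
      also have "\<dots> \<le> (c * ((c*a)^k * L * norm (w^p) ^ (p^k))) * a"
        using IH c w unfolding a_def by (intro mult_right_mono mult_mono) (auto intro: mnorm_ge0)
      also have "\<dots> = (c*a)^(Suc k) * L * norm w ^ (p^(Suc k))"
      proof -
        have "norm (w^p) ^ (p^k) = norm w ^ (p^(Suc k))"
          by (simp add: norm_power power_mult[symmetric])
        then show ?thesis by (simp add: algebra_simps)
      qed
      finally show "mnorm (D (Suc k) w) \<le> (c*a)^(Suc k) * L * norm w ^ (p^(Suc k))" .
    qed
  qed
  define M where "M = (\<lambda>k::nat. L * (1/2::real)^k)"
  have Dle: "norm (D k w) \<le> M k" if w: "w \<in> cball 0 \<rho>" for k and w :: complex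
  proof -
    have wR: "w \<in> cball 0 R" using w \<rho> by auto
    have nw: "norm w \<le> \<rho>" using w by simp
    have kp: "k \<le> p^k"
    proof -
      have "k < 2^k" by (rule less_exp)
      also have "(2::nat)^k \<le> p^k" using p by (intro power_mono) auto
      finally show ?thesis by simp
    qed
    have "norm w ^ (p^k) \<le> \<rho> ^ (p^k)" using nw by (intro power_mono) auto
    also have "\<dots> \<le> \<rho> ^ k" using \<rho> kp by (intro power_decreasing) auto
    finally have wk: "norm w ^ (p^k) \<le> \<rho> ^ k" .
    have "norm (D k w) \<le> mnorm (D k w)" by (rule norm_le_mnorm)
    also have "\<dots> \<le> (c*a)^k * L * norm w ^ (p^k)" using Dbound wR by blast
    also have "\<dots> \<le> (c*a)^k * L * \<rho> ^ k"
      using wk ca0 L0 by (intro mult_left_mono) auto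
    also have "\<dots> = L * (c * a * \<rho>)^k" by (simp add: power_mult_distrib algebra_simps)
    also have "\<dots> \<le> L * (1/2)^k"
      using \<rho>2 \<rho> ca0 L0 by (intro mult_left_mono power_mono) auto
    finally show ?thesis unfolding M_def .
  qed
  have sumM: "summable M" unfolding M_def by (intro summable_mult summable_geometric) auto
  have ulim: "uniform_limit (cball 0 \<rho>) (\<lambda>n w. \<Sum>i<n. D i w) (\<lambda>w. \<Sum>i. D i w) sequentially"
    by (rule Weierstrass_m_test[OF Dle sumM])
  define G where "G = (\<lambda>w. mat 1 + (\<Sum>i. D i w))"
  have Hsum: "H k w = mat 1 + (\<Sum>i<k. D i w)" for k and w :: complex
    by (induction k) (auto simp: H_def D_def)
  have powr: "w^p \<in> ball 0 r" if "w \<in> ball 0 r" for w :: complex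
    using norm_pow_le[OF _ p1, of w] that r by auto
  have anaH: "ana_mat (H k) (ball 0 r)" for k
  proof (induction k)
    case 0
    then show ?case by (simp add: H_def ana_const)
  next
    case (Suc k)
    have "ana_mat (\<lambda>w. H k (w^p)) (ball 0 r)"
      by (rule ana_compose[OF Suc.IH]) (auto intro!: analytic_intros powr)
    then show ?case unfolding Hsuc[abs_def]
      by (intro ana_mult anaBi ana_const)
  qed
  have anaD: "ana_mat (D k) (ball 0 r)" for k
    unfolding D_def by (intro ana_diff anaH)
  have crsub: "cball 0 \<rho> \<subseteq> ball 0 r" using \<rho> R by auto
  have holG: "(\<lambda>w. G w $ i $ j) holomorphic_on ball 0 \<rho>" for i j
  proof -
    have ul: "uniform_limit (cball 0 \<rho>) (\<lambda>n w. (\<Sum>k<n. D k w) $ i $ j) (\<lambda>w. (\<Sum>k. D k w) $ i $ j) sequentially"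
      by (rule uniform_limit_entry[OF ulim])
    have "continuous_on (cball 0 \<rho>) (\<lambda>w. (\<Sum>k<n. D k w) $ i $ j) \<and> (\<lambda>w. (\<Sum>k<n. D k w) $ i $ j) holomorphic_on ball 0 \<rho>" for n
    proof -
      have "(\<lambda>w. (\<Sum>k<n. D k w $ i $ j)) analytic_on ball 0 r"
        using anaD unfolding ana_mat_def by (intro analytic_intros) auto
      then have h: "(\<lambda>w. (\<Sum>k<n. D k w) $ i $ j) holomorphic_on ball 0 r"
        by (simp add: analytic_imp_holomorphic)
      have bsub: "ball 0 \<rho> \<subseteq> ball 0 r" using crsub by auto
      show ?thesis
        by (intro conjI continuous_on_subset[OF holomorphic_on_imp_continuous_on[OF h] crsub] holomorphic_on_subset[OF h bsub])
    qed
    then have ev: "eventually (\<lambda>n. continuous_on (cball 0 \<rho>) (\<lambda>w. (\<Sum>k<n. D k w) $ i $ j) \<and> (\<lambda>w. (\<Sum>k<n. D k w) $ i $ j) holomorphic_on ball 0 \<rho>) sequentially"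
      by (intro always_eventually allI)
    have nt: "\<not> trivial_limit (sequentially::nat filter)" by simp
    obtain "(\<lambda>w. (\<Sum>k. D k w) $ i $ j) holomorphic_on ball 0 \<rho>"
      using holomorphic_uniform_limit[OF ev ul nt] by blast
    then have "(\<lambda>w. (\<Sum>k. D k w) $ i $ j) holomorphic_on ball 0 \<rho>" .
    then show ?thesis unfolding G_def by (auto intro!: holomorphic_intros)
  qed
  have anaG: "ana_mat G (ball 0 \<rho>)" unfolding ana_mat_def using holG by (simp add: analytic_on_open)
  have Hlim: "(\<lambda>k. H k w) \<longlonglongrightarrow> G w" if "w \<in> cball 0 \<rho>" for w :: complex
    unfolding Hsum G_def by (intro tendsto_add tendsto_const tendsto_uniform_limitI[OF ulim that])
  have Geq: "G w = Bi w ** G (w^p) ** C" if w: "w \<in> ball 0 \<rho>" for w :: complex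
  proof -
    have wp: "w^p \<in> cball 0 \<rho>" using norm_pow_le[OF _ p1, of w] w \<rho> by auto
    have wc: "w \<in> cball 0 \<rho>" using w by auto
    have "(\<lambda>k. H (Suc k) w) \<longlonglongrightarrow> G w" by (rule LIMSEQ_Suc[OF Hlim[OF wc]])
    moreover have "(\<lambda>k. H (Suc k) w) \<longlonglongrightarrow> Bi w ** G (w^p) ** C"
      unfolding Hsuc by (intro tendsto_mmult Hlim wp)
    ultimately show ?thesis by (rule LIMSEQ_unique)
  qed
  have D0z: "D k 0 = 0" for k
  proof -
    have "(0::complex) \<in> cball 0 R" using R by simp
    then have "mnorm (D k 0) \<le> (c*a)^k * L * norm (0::complex) ^ (p^k)" using Dbound by blast
    also have "\<dots> = 0" using p by simp
    finally show ?thesis using mnorm_ge0[of "D k 0"] mnorm_zero_iff by (meson antisym)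
  qed
  have G0: "G 0 = mat 1" unfolding G_def D0z by simp
  have adet: "(\<lambda>w. det (G w)) analytic_on ball 0 \<rho>" by (rule ana_det[OF anaG])
  have "{0} \<subseteq> ball (0::complex) \<rho>" using \<rho> by simp
  have cont: "isCont (\<lambda>w. det (G w)) 0"
    by (rule analytic_at_imp_isCont[OF analytic_on_subset[OF adet \<open>{0} \<subseteq> ball 0 \<rho>\<close>]])
  have nz0: "det (G 0) \<noteq> 0" using G0 by simp
  obtain e where e: "e > 0" "\<And>y. dist 0 y < e \<Longrightarrow> det (G y) \<noteq> 0"
    using continuous_at_avoid[OF cont nz0] by blast
  define \<rho>1 where "\<rho>1 = min \<rho> e"
  show ?thesis
  proof (intro exI conjI ballI)
    show "0 < \<rho>1" using \<rho> e by (simp add: \<rho>1_def)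
    show "\<rho>1 \<le> r" using \<rho> R by (simp add: \<rho>1_def)
    show "ana_mat G (ball 0 \<rho>1)" using anaG by (rule ana_subset) (auto simp: \<rho>1_def)
    fix w :: complex assume w: "w \<in> ball 0 \<rho>1"
    show "det (G w) \<noteq> 0" using e w by (auto simp: \<rho>1_def)
    have w': "w \<in> ball 0 \<rho>" and wr: "w \<in> ball 0 r" using w \<rho> R by (auto simp: \<rho>1_def)
    have "B0 w ** G w = (B0 w ** Bi w) ** G (w^p) ** C"
      using Geq[OF w'] by (simp add: matrix_mul_assoc)
    also have "\<dots> = G (w^p) ** C" unfolding Bi_def using mi_det(1)[of "B0 w"] nz wr by simp
    finally show "B0 w ** G w = G (w^p) ** B0 0" unfolding C_def .
  qed
qed




lemma sparse_UNIV_iff: "X sparse_in UNIV \<longleftrightarrow> (\<forall>y. eventually (\<lambda>z. z \<notin> X) (at y))"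
  by (simp add: sparse_in_open islimpt_iff_eventually)

lemma pre_sparse:
  fixes S :: "complex set"
  assumes "S sparse_in UNIV" "N > 0"
  shows "{z. z^N \<in> S} sparse_in UNIV"
  unfolding sparse_UNIV_iff
proof
  fix y :: complex
  have "eventually (\<lambda>x. x \<notin> S) (at (y^N))" using assms(1) unfolding sparse_UNIV_iff by blast
  then obtain V where V: "open V" "y^N \<in> V" "\<And>x. x \<in> V \<Longrightarrow> x \<noteq> y^N \<Longrightarrow> x \<notin> S"
    unfolding eventually_at_topological by blast
  have lim: "((\<lambda>z. z^N) \<longlongrightarrow> y^N) (at y)" by (intro tendsto_intros)
  have e1: "eventually (\<lambda>z. z^N \<in> V) (at y)" using topological_tendstoD[OF lim V(1,2)] .
  have fin: "finite {z::complex. z^N = y^N}" using assms(2) by (rule finite_nth_roots)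
  have e2: "eventually (\<lambda>z. z \<notin> {z::complex. z^N = y^N}) (at y)"
  proof -
    have "\<not> y islimpt {z::complex. z^N = y^N}" using fin islimpt_finite by blast
    then show ?thesis unfolding islimpt_iff_eventually by blast
  qed
  show "eventually (\<lambda>z. z \<notin> {z. z^N \<in> S}) (at y)"
    using e1 e2 by eventually_elim (use V in auto)
qed

lemma rat_mero:
  assumes "rational_fun f"
  shows "f meromorphic_on UNIV"
proof -
  obtain P Q :: "complex poly" where PQ: "Q \<noteq> 0" "\<And>z. poly Q z \<noteq> 0 \<Longrightarrow> f z = poly P z / poly Q z"
    using assms unfolding rational_fun_def by blast
  have fin: "finite {z. poly Q z = 0}" using PQ(1) by (rule poly_roots_finite)
  have m: "(\<lambda>z. poly P z / poly Q z) meromorphic_on UNIV"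
    by (intro meromorphic_intros analytic_on_imp_meromorphic_on analytic_on_poly')
  have "eventually (\<lambda>z. poly P z / poly Q z = f z) (cosparse UNIV)"
    unfolding eventually_cosparse
    by (rule sparse_in_subset2[OF finite_imp_sparse[OF fin]]) (use PQ in force)
  then have "(\<lambda>z. poly P z / poly Q z) meromorphic_on UNIV \<longleftrightarrow> (\<lambda>z. f z) meromorphic_on UNIV"
    by (rule meromorphic_on_cong'[OF _ refl])
  then show ?thesis using m by simp
qed




lemma global_ext:
  fixes A F0 :: "complex \<Rightarrow> complex^'n^'n" and C :: "complex^'n^'n"
  assumes p: "p \<ge> 2" and R0: "R0 \<ge> 1"
    and Adet: "eventually (\<lambda>z. det (A z) \<noteq> 0) (cosparse UNIV)"
    and Amero: "mero_mat A UNIV"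
    and F0a: "ana_mat F0 {z. R0 < norm z}"
    and F0d: "\<And>z. R0 < norm z \<Longrightarrow> det (F0 z) \<noteq> 0"
    and F0e: "\<And>z. R0 < norm z \<Longrightarrow> A z ** F0 z = F0 (z^p) ** C"
    and Cd: "det C \<noteq> 0"
  shows "\<exists>F. mero_mat F {z. 1 < norm z} \<and> (\<forall>z. R0 < norm z \<longrightarrow> F z = F0 z) \<and>
             eventually (\<lambda>z. det (F z) \<noteq> 0) (cosparse {z. 1 < norm z}) \<and>
             eventually (\<lambda>z. matrix_inv (phi p F z) ** A z ** F z = C) (cosparse {z. 1 < norm z})"
proof -
  define S where "S = {z. det (A z) = 0}"
  have Ssp: "S sparse_in UNIV" using Adet unfolding eventually_cosparse S_def by simp
  define Ai where "Ai = (\<lambda>z. matrix_inv (A z))"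
  have Aim: "mero_mat Ai UNIV" unfolding Ai_def by (rule mero_inv[OF Amero Adet])
  have p1: "p \<ge> 1" using p by simp
  define U where "U = (\<lambda>k. {z::complex. R0 < norm z ^ (p^k)})"
  have U0: "U 0 = {z. R0 < norm z}" unfolding U_def by simp
  have Uopen: "open (U k)" for k unfolding U_def
    by (intro open_Collect_less continuous_intros)
  have USuc: "z \<in> U (Suc k) \<longleftrightarrow> z^p \<in> U k" for z k
  proof -
    have "norm (z^p) ^ (p^k) = norm z ^ (p^(Suc k))"
      by (simp add: norm_power power_mult[symmetric])
    then show ?thesis unfolding U_def by simp
  qed
  have Umono: "U k \<subseteq> U (Suc k)" for k
  proof
    fix z assume z: "z \<in> U k"
    then have x1: "1 < norm z ^ (p^k)" using R0 unfolding U_def by simp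
    have "norm z ^ (p^k) = (norm z ^ (p^k)) ^ 1" by simp
    also have "\<dots> \<le> (norm z ^ (p^k)) ^ p" using x1 p1 by (intro power_increasing) auto
    also have "\<dots> = norm z ^ (p^(Suc k))" by (simp add: power_mult[symmetric] mult.commute)
    finally show "z \<in> U (Suc k)" using z unfolding U_def by simp
  qed
  have Umono_le: "i \<le> m \<Longrightarrow> U i \<subseteq> U m" for i m
    using lift_Suc_mono_le[of U, OF Umono] by blast
  have Ugt1: "1 < norm z" if "z \<in> U k" for z k
  proof (rule ccontr)
    assume "\<not> 1 < norm z"
    then have "norm z ^ (p^k) \<le> 1" by (intro power_le_one) auto
    then show False using that R0 unfolding U_def by simp
  qed
  have Uex: "\<exists>k. z \<in> U k" if z1: "1 < norm z" for z
  proof -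
    obtain n where n: "R0 < norm z ^ n" using real_arch_pow[OF z1] by blast
    have "n \<le> p^n"
    proof -
      have "n < 2^n" by (rule less_exp)
      also have "(2::nat)^n \<le> p^n" using p by (intro power_mono) auto
      finally show ?thesis by simp
    qed
    then have "norm z ^ n \<le> norm z ^ (p^n)" using z1 by (intro power_increasing) auto
    then show ?thesis using n unfolding U_def by (intro exI[of _ n]) auto
  qed
  define E where "E = (\<lambda>k. {z::complex. \<exists>j<k. z^(p^j) \<in> S})"
  have Esp: "E k sparse_in UNIV" for k
  proof -
    have "E k = (\<Union>j\<in>{..<k}. {z. z^(p^j) \<in> S})" unfolding E_def by auto
    also have "\<dots> sparse_in UNIV"
      by (intro sparse_in_UN_finite pre_sparse Ssp) (use p in auto)
    finally show ?thesis .
  qed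
  have Emono: "i \<le> m \<Longrightarrow> E i \<subseteq> E m" for i m unfolding E_def using order.strict_trans2 by blast
  have ESuc: "z \<notin> S \<and> z^p \<notin> E k" if "z \<notin> E (Suc k)" for z k
  proof
    show "z \<notin> S" using that unfolding E_def by (metis (mono_tags, lifting) mem_Collect_eq power_one_right power_0 zero_less_Suc)
    show "z^p \<notin> E k"
    proof
      assume "z^p \<in> E k"
      then obtain j where j: "j < k" "(z^p)^(p^j) \<in> S" unfolding E_def by blast
      have "(z^p)^(p^j) = z^(p^(Suc j))" by (simp add: power_mult[symmetric])
      then show False using that j unfolding E_def by auto
    qed
  qed
  define Fk where "Fk = itf p Ai F0 C"
  have Fk0: "Fk 0 = F0" unfolding Fk_def by simp
  have FkS: "Fk (Suc k) z = Ai z ** Fk k (z^p) ** C" for k z unfolding Fk_def by simp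
  have Fkm: "mero_mat (Fk k) (U k)" for k
  proof (induction k)
    case 0
    then show ?case unfolding Fk0 U0 by (rule ana_imp_mero[OF F0a])
  next
    case (Suc k)
    have "mero_mat (\<lambda>z. Fk k (z^p)) (U (Suc k))"
      by (rule mero_compose[OF Suc.IH]) (auto intro!: analytic_intros simp: USuc)
    then show ?case unfolding FkS[abs_def]
      by (intro mero_mult mero_const mero_subset[OF Aim]) auto
  qed
  have Fkd: "det (Fk k z) \<noteq> 0" if "z \<in> U k" "z \<notin> E k" for k z
    using that
  proof (induction k arbitrary: z)
    case 0
    then show ?case using F0d unfolding Fk0 U0 by auto
  next
    case (Suc k)
    have zS: "z \<notin> S" and zp: "z^p \<notin> E k" using ESuc[OF Suc.prems(2)] by auto
    have zpU: "z^p \<in> U k" using Suc.prems(1) USuc by auto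
    have "det (Ai z) \<noteq> 0" unfolding Ai_def using zS mi_det(3) unfolding S_def by auto
    then show ?case unfolding FkS using Suc.IH[OF zpU zp] Cd by (simp add: det_mul)
  qed
  have agree: "Fk (Suc k) z = Fk k z" if "z \<in> U k" "z \<notin> E (Suc k)" for k z
    using that
  proof (induction k arbitrary: z)
    case 0
    have zS: "z \<notin> S" using ESuc[OF "0.prems"(2)] by auto
    then have dA: "det (A z) \<noteq> 0" unfolding S_def by auto
    have "Fk (Suc 0) z = Ai z ** (F0 (z^p) ** C)" unfolding FkS Fk0 by (simp add: matrix_mul_assoc)
    also have "\<dots> = Ai z ** (A z ** F0 z)" using F0e "0.prems"(1) unfolding U0 by simp
    also have "\<dots> = F0 z" unfolding Ai_def using mi_det(2)[OF dA] by (simp add: matrix_mul_assoc)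
    finally show ?case unfolding Fk0 .
  next
    case (Suc k)
    have zp: "z^p \<notin> E (Suc k)" using ESuc[OF Suc.prems(2)] by auto
    have zpU: "z^p \<in> U k" using Suc.prems(1) USuc by auto
    have "Fk (Suc (Suc k)) z = Ai z ** Fk (Suc k) (z^p) ** C" by (rule FkS)
    also have "\<dots> = Ai z ** Fk k (z^p) ** C" using Suc.IH[OF zpU zp] by simp
    also have "\<dots> = Fk (Suc k) z" by (rule FkS[symmetric])
    finally show ?case .
  qed
  have chain: "Fk m z = Fk i z" if "i \<le> m" "z \<in> U i" "z \<notin> E m" for i m z
    using that
  proof (induction m)
    case 0
    then show ?case by simp
  next
    case (Suc m)
    show ?case
    proof (cases "i = Suc m")
      case True
      then show ?thesis by simp
    next
      case False
      then have im: "i \<le> m" using Suc.prems by simp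
      have zU: "z \<in> U m" using Umono_le[OF im] Suc.prems by auto
      have zE: "z \<notin> E m" using Emono[of m "Suc m"] Suc.prems by auto
      show ?thesis using agree[OF zU Suc.prems(3)] Suc.IH[OF im Suc.prems(2) zE] by simp
    qed
  qed
  define kz where "kz = (\<lambda>z. LEAST k. z \<in> U k)"
  define F where "F = (\<lambda>z. Fk (kz z) z)"
  have FFk: "F z = Fk m z" if "z \<in> U m" "z \<notin> E m" for z m
  proof -
    have "kz z \<le> m" unfolding kz_def using that(1) by (rule Least_le)
    moreover have "z \<in> U (kz z)" unfolding kz_def using that(1) by (rule LeastI)
    ultimately show ?thesis unfolding F_def using chain that(2) by metis
  qed
  have FF0: "F z = F0 z" if "R0 < norm z" for z
  proof -
    have "z \<in> U 0" using that U0 by simp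
    then have "kz z = 0" unfolding kz_def by (rule Least_eq_0)
    then show ?thesis unfolding F_def by (simp add: Fk0)
  qed
  have Feq: "A z ** F z = F (z^p) ** C" if z1: "1 < norm z" and zS: "z \<notin> S" for z
  proof -
    obtain k where k: "z \<in> U k" using Uex[OF z1] by blast
    have zU: "z \<in> U (kz z)" unfolding kz_def using k by (rule LeastI)
    show ?thesis
    proof (cases "kz z")
      case 0
      then have z0: "R0 < norm z" using zU U0 by simp
      have "z \<in> U (Suc 0)" using zU 0 Umono by auto
      then have "R0 < norm (z^p)" using USuc U0 by auto
      then show ?thesis using FF0 z0 F0e by simp
    next
      case (Suc j)
      have zpj: "z^p \<in> U j" using zU Suc USuc by simp
      have "kz (z^p) = j" unfolding kz_def
      proof (rule Least_equality)
        show "z^p \<in> U j" by fact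
        fix y assume "z^p \<in> U y"
        then have "z \<in> U (Suc y)" using USuc by simp
        then have "kz z \<le> Suc y" unfolding kz_def by (rule Least_le)
        then show "j \<le> y" using Suc by simp
      qed
      then have Fz: "F z = Ai z ** F (z^p) ** C" unfolding F_def Suc FkS by simp
      have dA: "det (A z) \<noteq> 0" using zS unfolding S_def by auto
      have "A z ** F z = (A z ** Ai z) ** F (z^p) ** C" unfolding Fz by (simp add: matrix_mul_assoc)
      also have "\<dots> = F (z^p) ** C" unfolding Ai_def using mi_det(1)[OF dA] by simp
      finally show ?thesis .
    qed
  qed
  have evloc: "eventually (\<lambda>z. z \<in> U m \<and> z \<notin> E j) (at z0)" if "z0 \<in> U m" for z0 m j
  proof -
    have "eventually (\<lambda>z. z \<in> U m) (at z0)" by (rule eventually_at_in_open'[OF Uopen that])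
    moreover have "eventually (\<lambda>z. z \<notin> E j) (at z0)"
      using Esp[of j] unfolding sparse_UNIV_iff by blast
    ultimately show ?thesis by eventually_elim auto
  qed
  have Omega: "open {z::complex. 1 < norm z}" by (intro open_Collect_less continuous_intros)
  show ?thesis
  proof (intro exI conjI allI impI)
    show "mero_mat F {z. 1 < norm z}"
      unfolding mero_mat_def
    proof (intro allI)
      fix i j
      show "(\<lambda>z. F z $ i $ j) meromorphic_on {z. 1 < norm z}"
        unfolding meromorphic_on_meromorphic_at[of _ "{z. 1 < norm z}"]
      proof
        fix z0 :: complex assume "z0 \<in> {z. 1 < norm z}"
        then obtain m where m: "z0 \<in> U m" using Uex by auto
        have mm: "(\<lambda>z. Fk m z $ i $ j) meromorphic_on {z0}"
          using Fkm[of m] m unfolding mero_mat_def by (meson empty_subsetI insert_subset meromorphic_on_subset)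
        have "eventually (\<lambda>z. Fk m z $ i $ j = F z $ i $ j) (at z0)"
          using evloc[OF m, of m] by eventually_elim (use FFk in auto)
        then have "(\<lambda>z. Fk m z $ i $ j) meromorphic_on {z0} \<longleftrightarrow> (\<lambda>z. F z $ i $ j) meromorphic_on {z0}"
          by (intro meromorphic_on_cong) auto
        then show "(\<lambda>z. F z $ i $ j) meromorphic_on {z0}" using mm by simp
      qed
    qed
  next
    fix z :: complex assume "R0 < norm z"
    then show "F z = F0 z" by (rule FF0)
  next
    show "eventually (\<lambda>z. det (F z) \<noteq> 0) (cosparse {z. 1 < norm z})"
      unfolding eventually_cosparse_open_eq[OF Omega]
    proof
      fix z0 :: complex assume "z0 \<in> {z. 1 < norm z}"
      then obtain m where m: "z0 \<in> U m" using Uex by auto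
      show "eventually (\<lambda>z. det (F z) \<noteq> 0) (at z0)"
        using evloc[OF m, of m] by eventually_elim (use FFk Fkd in auto)
    qed
  next
    show "eventually (\<lambda>z. matrix_inv (phi p F z) ** A z ** F z = C) (cosparse {z. 1 < norm z})"
      unfolding eventually_cosparse_open_eq[OF Omega]
    proof
      fix z0 :: complex assume "z0 \<in> {z. 1 < norm z}"
      then obtain m where m: "z0 \<in> U m" using Uex by auto
      show "eventually (\<lambda>z. matrix_inv (phi p F z) ** A z ** F z = C) (at z0)"
        using evloc[OF m, of "Suc m"]
      proof eventually_elim
        case (elim z)
        then have zU: "z \<in> U m" and zE: "z \<notin> E (Suc m)" by auto
        have z1: "1 < norm z" using Ugt1 zU by blast
        have zS: "z \<notin> S" and zpE: "z^p \<notin> E m" using ESuc[OF zE] by auto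
        have zpU: "z^p \<in> U m" using Umono[of m] zU USuc by auto
        have dF: "det (F (z^p)) \<noteq> 0" using FFk[OF zpU zpE] Fkd[OF zpU zpE] by simp
        have "matrix_inv (F (z^p)) ** A z ** F z = matrix_inv (F (z^p)) ** (A z ** F z)"
          by (simp add: matrix_mul_assoc)
        also have "\<dots> = (matrix_inv (F (z^p)) ** F (z^p)) ** C"
          unfolding Feq[OF z1 zS] by (simp add: matrix_mul_assoc)
        also have "\<dots> = C" using mi_det(2)[OF dF] by simp
        finally show ?case unfolding phi_def .
      qed
    qed
  qed
qed




lemma ev_ana_at0:
  assumes "isolated_singularity_at f 0"
  shows "eventually (\<lambda>w. f analytic_on {w}) (at 0)"
proof -
  obtain r where r: "r > 0" "f analytic_on ball 0 r - {0}"
    using assms unfolding isolated_singularity_at_def by blast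
  show ?thesis unfolding eventually_at
    by (rule exI[of _ r]) (use r in \<open>auto intro: analytic_on_subset simp: dist_norm\<close>)
qed

lemma ev_ana_at0':
  assumes "f analytic_on {0}"
  shows "eventually (\<lambda>w. f analytic_on {w}) (at 0)"
proof -
  obtain e where e: "e > 0" "f holomorphic_on ball 0 e" using assms analytic_at_ball by blast
  show ?thesis unfolding eventually_at
    by (rule exI[of _ e]) (use e in \<open>auto intro: holomorphic_on_imp_analytic_at simp: dist_norm\<close>)
qed

lemma ev_at0_ball:
  assumes "eventually P (at (0::complex))"
  shows "\<exists>d>0. \<forall>w. w \<noteq> 0 \<longrightarrow> norm w < d \<longrightarrow> P w"
  using assms unfolding eventually_at by (auto simp: dist_norm)

lemma ev_at0_ballI:
  assumes "d > 0" "\<And>w. w \<noteq> 0 \<Longrightarrow> norm w < d \<Longrightarrow> P w"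
  shows "eventually P (at (0::complex))"
  unfolding eventually_at using assms by (auto simp: dist_norm)

theorem mainTheorem18:
  fixes p :: nat and A :: "complex \<Rightarrow> complex^'n::finite^'n"
  assumes "p \<ge> 2"
    and "GL_rat A"
    and "regular_singular_at_infinity p A"
  shows "\<exists>(F :: complex \<Rightarrow> complex^'n^'n) (Ainf :: complex^'n^'n).
           (\<forall>i j. (\<lambda>z. F z $ i $ j) meromorphic_on {z. 1 < norm z}) \<and>
           (\<forall>i j. (\<lambda>w. F (1 / w) $ i $ j) meromorphic_on {0}) \<and>
           (\<forall>\<^sub>\<approx>z\<in>{z. 1 < norm z}. det (F z) \<noteq> 0) \<and>
           invertible Ainf \<and>
           (\<forall>\<^sub>\<approx>z\<in>{z. 1 < norm z}. matrix_inv (phi p F z) ** A z ** F z = Ainf)"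
proof -
  obtain T :: "complex \<Rightarrow> complex^'n^'n" and B0 :: "complex \<Rightarrow> complex^'n^'n" where
    Tm: "\<forall>i j. (\<lambda>w. T (1 / w) $ i $ j) meromorphic_on {0}" and
    Tdet: "\<forall>\<^sub>F w in at 0. det (T (1 / w)) \<noteq> 0" and
    B0a: "\<forall>i j. (\<lambda>w. B0 w $ i $ j) analytic_on {0}" and
    B0d: "det (B0 0) \<noteq> 0" and
    B0e: "\<forall>\<^sub>F w in at 0. B0 w = (let z = 1 / w in matrix_inv (phi p T z) ** A z ** T z)"
    using assms(3) unfolding regular_singular_at_infinity_def by blast
  have ev1: "eventually (\<lambda>w. \<forall>i j. (\<lambda>w. T (1/w) $ i $ j) analytic_on {w}) (at 0)"
  proof (intro eventually_all_finite)
    fix i j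
    show "eventually (\<lambda>w. (\<lambda>w. T (1/w) $ i $ j) analytic_on {w}) (at 0)"
      using Tm by (intro ev_ana_at0 meromorphic_on_isolated_singularity) auto
  qed
  have ev3: "eventually (\<lambda>w. \<forall>i j. (\<lambda>w. B0 w $ i $ j) analytic_on {w}) (at 0)"
  proof (intro eventually_all_finite)
    fix i j
    show "eventually (\<lambda>w. (\<lambda>w. B0 w $ i $ j) analytic_on {w}) (at 0)"
      using B0a by (intro ev_ana_at0') auto
  qed
  have ev4: "eventually (\<lambda>w. det (B0 w) \<noteq> 0) (at 0)"
  proof -
    have "ana_mat B0 {0}" using B0a unfolding ana_mat_def by blast
    then have "(\<lambda>w. det (B0 w)) analytic_on {0}" by (rule ana_det)
    then show ?thesis using B0d by (rule analytic_at_neq_imp_eventually_neq)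
  qed
  define Q where "Q = (\<lambda>w. (\<forall>i j. (\<lambda>w. T (1/w) $ i $ j) analytic_on {w}) \<and> det (T (1 / w)) \<noteq> 0 \<and>
      (\<forall>i j. (\<lambda>w. B0 w $ i $ j) analytic_on {w}) \<and> det (B0 w) \<noteq> 0 \<and>
      B0 w = matrix_inv (T ((1/w)^p)) ** A (1/w) ** T (1/w))"
  have "eventually Q (at 0)"
    using ev1 Tdet ev3 ev4 B0e unfolding Q_def by eventually_elim (simp add: Let_def phi_def)
  then obtain d where d: "d > 0" and P0: "\<And>w. w \<noteq> 0 \<Longrightarrow> norm w < d \<Longrightarrow> Q w"
    using ev_at0_ball by blast
  have Pa: "(\<forall>i j. (\<lambda>w. T (1/w) $ i $ j) analytic_on {w})" if "w \<noteq> 0" "norm w < d" for w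
    using P0[OF that] unfolding Q_def by (elim conjE) assumption
  have Pb: "det (T (1 / w)) \<noteq> 0" if "w \<noteq> 0" "norm w < d" for w
    using P0[OF that] unfolding Q_def by (elim conjE) assumption
  have Pc: "(\<forall>i j. (\<lambda>w. B0 w $ i $ j) analytic_on {w})" if "w \<noteq> 0" "norm w < d" for w
    using P0[OF that] unfolding Q_def by (elim conjE) assumption
  have Pd: "det (B0 w) \<noteq> 0" if "w \<noteq> 0" "norm w < d" for w
    using P0[OF that] unfolding Q_def by (elim conjE) assumption
  have Pe: "B0 w = matrix_inv (T ((1/w)^p)) ** A (1/w) ** T (1/w)" if "w \<noteq> 0" "norm w < d" for w
    using P0[OF that] unfolding Q_def by (elim conjE) assumption
  define r where "r = min d 1"
  have r: "0 < r" "r \<le> 1" "r \<le> d" using d by (auto simp: r_def)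
  have anaB0: "ana_mat B0 (ball 0 r)"
    unfolding ana_mat_def
  proof (intro allI)
    fix i j
    show "(\<lambda>w. B0 w $ i $ j) analytic_on ball 0 r"
      unfolding analytic_on_analytic_at[of _ "ball 0 r"]
    proof
      fix w :: complex assume w: "w \<in> ball 0 r"
      show "(\<lambda>w. B0 w $ i $ j) analytic_on {w}"
      proof (cases "w = 0")
        case True then show ?thesis using B0a by simp
      next
        case False
        have wd: "norm w < d" using w r by simp
        show ?thesis using Pc[OF False wd] by blast
      qed
    qed
  qed
  have nzB0: "\<forall>w\<in>ball 0 r. det (B0 w) \<noteq> 0"
  proof
    fix w :: complex assume w: "w \<in> ball 0 r"
    show "det (B0 w) \<noteq> 0"
    proof (cases "w = 0")
      case True then show ?thesis using B0d by simp
    next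
      case False
      have wd: "norm w < d" using w r by simp
      show ?thesis using Pd[OF False wd] by blast
    qed
  qed
  obtain \<rho> and G :: "complex \<Rightarrow> complex^'n^'n" where \<rho>: "0 < \<rho>" "\<rho> \<le> r" and anaG: "ana_mat G (ball 0 \<rho>)"
    and Gd: "\<forall>w\<in>ball 0 \<rho>. det (G w) \<noteq> 0" and Ge: "\<forall>w\<in>ball 0 \<rho>. B0 w ** G w = G (w^p) ** B0 0"
    using G_exists[OF assms(1) r(1,2) anaB0 nzB0] by blast
  define R0 where "R0 = 1 / \<rho>"
  have R0: "R0 \<ge> 1" using \<rho> r unfolding R0_def by simp
  have winv: "1/z \<noteq> 0 \<and> norm (1/z) < \<rho>" if "R0 < norm z" for z :: complex
  proof -
    have "norm z > 0" using that R0 by linarith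
    moreover have "1 / norm z < \<rho>"
    proof -
      have "1 < \<rho> * norm z" using that \<rho> unfolding R0_def by (simp add: field_simps)
      then show ?thesis using \<open>norm z > 0\<close> by (simp add: divide_less_eq)
    qed
    ultimately show ?thesis by (simp add: norm_divide)
  qed
  have Pz: "(\<forall>i j. (\<lambda>w. T (1/w) $ i $ j) analytic_on {1/z}) \<and> det (T z) \<noteq> 0 \<and>
      B0 (1/z) = matrix_inv (T (z^p)) ** A z ** T z" if "R0 < norm z" for z :: complex
  proof -
    have a: "1/z \<noteq> 0" and b: "norm (1/z) < d" using winv[OF that] \<rho> r by auto
    have "T (1/(1/z)) = T z" by simp
    then show ?thesis using Pa[OF a b] Pb[OF a b] Pe[OF a b] by simp
  qed
  define U0 where "U0 = {z::complex. R0 < norm z}"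
  define V where "V = {w::complex. w \<noteq> 0 \<and> norm w < \<rho>}"
  have anaTV: "ana_mat (\<lambda>w. T (1/w)) V"
    unfolding ana_mat_def
  proof (intro allI)
    fix i j
    show "(\<lambda>w. T (1/w) $ i $ j) analytic_on V"
      unfolding analytic_on_analytic_at[of _ V]
    proof
      fix w :: complex assume w: "w \<in> V"
      have a: "w \<noteq> 0" and b: "norm w < d" using w \<rho> r by (auto simp: V_def)
      show "(\<lambda>w. T (1/w) $ i $ j) analytic_on {w}" using Pa[OF a b] by blast
    qed
  qed
  have inv_an: "(\<lambda>z::complex. 1/z) analytic_on U0"
    by (intro analytic_intros) (use R0 in \<open>auto simp: U0_def\<close>)
  have anaT: "ana_mat T U0"
  proof -
    have "ana_mat (\<lambda>z. T (1 / (1 / z))) U0"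
      by (rule ana_compose[OF anaTV inv_an]) (use winv in \<open>auto simp: U0_def V_def\<close>)
    then show ?thesis by simp
  qed
  have anaG': "ana_mat (\<lambda>z. G (1/z)) U0"
    by (rule ana_compose[OF anaG inv_an]) (use winv in \<open>auto simp: U0_def\<close>)
  define F0 where "F0 = (\<lambda>z. T z ** G (1/z))"
  have F0a: "ana_mat F0 {z. R0 < norm z}"
    unfolding F0_def U0_def[symmetric] by (rule ana_mult[OF anaT anaG'])
  have F0d: "det (F0 z) \<noteq> 0" if "R0 < norm z" for z
    using Pz[OF that] Gd winv[OF that] unfolding F0_def by (simp add: det_mul)
  have F0e: "A z ** F0 z = F0 (z^p) ** B0 0" if z: "R0 < norm z" for z
  proof -
    have z1: "norm z \<ge> 1" using z R0 by simp
    have "norm z ^ 1 \<le> norm z ^ p" using z1 assms(1) by (intro power_increasing) auto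
    then have zp: "R0 < norm (z^p)" using z by (simp add: norm_power)
    have Bz: "B0 (1/z) = matrix_inv (T (z^p)) ** A z ** T z" using Pz[OF z] by blast
    have dTp: "det (T (z^p)) \<noteq> 0" using Pz[OF zp] by blast
    have wb: "1/z \<in> ball 0 \<rho>" using winv[OF z] by simp
    have Gz: "B0 (1/z) ** G (1/z) = G (1/z^p) ** B0 0" using Ge wb by (simp add: power_one_over)
    have "A z ** F0 z = (T (z^p) ** matrix_inv (T (z^p))) ** A z ** T z ** G (1/z)"
      unfolding F0_def using mi_det(1)[OF dTp] by (simp add: matrix_mul_assoc)
    also have "\<dots> = T (z^p) ** (B0 (1/z) ** G (1/z))" unfolding Bz by (simp add: matrix_mul_assoc)
    also have "\<dots> = F0 (z^p) ** B0 0" unfolding Gz F0_def by (simp add: matrix_mul_assoc)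
    finally show ?thesis .
  qed
  have Amero: "mero_mat A UNIV"
    using assms(2) unfolding GL_rat_def mero_mat_def by (auto intro: rat_mero)
  have Adet: "eventually (\<lambda>z. det (A z) \<noteq> 0) (cosparse UNIV)"
    using assms(2) unfolding GL_rat_def by blast
  obtain F :: "complex \<Rightarrow> complex^'n^'n" where Fm: "mero_mat F {z. 1 < norm z}"
    and FF0: "\<forall>z. R0 < norm z \<longrightarrow> F z = F0 z"
    and Fd: "eventually (\<lambda>z. det (F z) \<noteq> 0) (cosparse {z. 1 < norm z})"
    and Fe: "eventually (\<lambda>z. matrix_inv (phi p F z) ** A z ** F z = B0 0) (cosparse {z. 1 < norm z})"
    using global_ext[OF assms(1) R0 Adet Amero F0a F0d F0e B0d] by blast
  have inf: "(\<forall>i j. (\<lambda>w. F (1 / w) $ i $ j) meromorphic_on {0})"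
  proof -
    have "mero_mat (\<lambda>w. T (1/w)) {0}" using Tm unfolding mero_mat_def by blast
    moreover have "mero_mat G {0}" using anaG \<rho> by (intro ana_imp_mero ana_subset[OF anaG]) auto
    ultimately have m: "mero_mat (\<lambda>w. T (1/w) ** G w) {0}" by (rule mero_mult)
    have ev: "eventually (\<lambda>w. T (1/w) ** G w = F (1/w)) (at 0)"
    proof (rule ev_at0_ballI[OF \<rho>(1)])
      fix w :: complex assume w0: "w \<noteq> 0" and w: "norm w < \<rho>"
      have "R0 < norm (1/w)" using w0 w \<rho> unfolding R0_def by (simp add: norm_divide field_simps)
      then show "T (1/w) ** G w = F (1/w)" using FF0 unfolding F0_def by simp
    qed
    show ?thesis
    proof (intro allI)
      fix i j
      have "(\<lambda>w. (T (1/w) ** G w) $ i $ j) meromorphic_on {0} \<longleftrightarrow> (\<lambda>w. F (1/w) $ i $ j) meromorphic_on {0}"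
        by (intro meromorphic_on_cong) (use ev in \<open>auto elim: eventually_mono\<close>)
      then show "(\<lambda>w. F (1/w) $ i $ j) meromorphic_on {0}" using m unfolding mero_mat_def by blast
    qed
  qed
  show ?thesis
  proof (intro exI conjI)
    show "\<forall>i j. (\<lambda>z. F z $ i $ j) meromorphic_on {z. 1 < norm z}" using Fm unfolding mero_mat_def .
    show "\<forall>i j. (\<lambda>w. F (1 / w) $ i $ j) meromorphic_on {0}" by (rule inf)
    show "\<forall>\<^sub>\<approx>z\<in>{z. 1 < norm z}. det (F z) \<noteq> 0" by (rule Fd)
    show "invertible (B0 0)" using B0d by (simp add: invertible_det_nz)
    show "\<forall>\<^sub>\<approx>z\<in>{z. 1 < norm z}. matrix_inv (phi p F z) ** A z ** F z = B0 0" by (rule Fe)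
  qed
qed


end
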